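(* For all $1\le i<j\le\ell$, $X_iX_j=q^{-1}X_jX_i$.
   Context: $0<q<1$, $\ell\ge1$. In $U_q(\mathfrak{su}(\ell+1))$ (generators $K_i^{\pm1},E_i,F_i=E_i^*$, $1\le i\le\ell$, standard Drinfeld–Jimbo relations $K_iE_iK_i^{-1}=qE_i$, $K_iE_jK_i^{-1}=q^{-1/2}E_j$ for $|i-j|=1$, $=E_j$ for $|i-j|>1$, $[E_i,F_j]=\delta_{ij}\frac{K_i^2-K_i^{-2}}{q-q^{-1}}$, quantum Serre relations), enlarged by $\hat K=(K_1K_2^2\cdots K_\ell^\ell)^{2/(\ell+1)}$, set $[a,b]_q=ab-q^{-1}ba$, $M_{ii}=E_i$, $M_{jk}=[E_j,M_{j+1,k}]_q$ ($j<k$), $N_{i\ell}=(K_iK_{i+1}\cdots K_\ell)\hat K^{-1}$ and $X_i:=N_{i\ell}M_{i\ell}^*$. *)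

theory Defs
  imports Complex_Main
begin

text \<open>Abstract setting: a real unital algebra with an involution s (the star).
  Since q is real, conjugate-linearity of the star is just real-linearity.\<close>

definition star_alg :: "('a::real_algebra_1 \<Rightarrow> 'a) \<Rightarrow> bool" where
  "star_alg s \<longleftrightarrow>
     (\<forall>x y. s (x + y) = s x + s y) \<and>
     (\<forall>x y. s (x * y) = s y * s x) \<and>
     (\<forall>c x. s (scaleR c x) = scaleR c (s x)) \<and>
     (\<forall>x. s (s x) = x) \<and> s 1 = 1"

definition qcomm :: "real \<Rightarrow> 'a::real_algebra_1 \<Rightarrow> 'a \<Rightarrow> 'a" where
  "qcomm q a b = a * b - scaleR (1 / q) (b * a)"

text \<open>Mrec q E n k = M_{k-n,k}.\<close>
primrec Mrec :: "real \<Rightarrow> (nat \<Rightarrow> 'a::real_algebra_1) \<Rightarrow> nat \<Rightarrow> nat \<Rightarrow> 'a" where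
  "Mrec q E 0 k = E k"
| "Mrec q E (Suc n) k = qcomm q (E (k - Suc n)) (Mrec q E n k)"

definition Mq :: "real \<Rightarrow> (nat \<Rightarrow> 'a::real_algebra_1) \<Rightarrow> nat \<Rightarrow> nat \<Rightarrow> 'a" where
  "Mq q E j k = Mrec q E (k - j) k"

definition Nq :: "(nat \<Rightarrow> 'a::real_algebra_1) \<Rightarrow> 'a \<Rightarrow> nat \<Rightarrow> nat \<Rightarrow> 'a" where
  "Nq K Khinv i l = foldr (*) (map K [i..<Suc l]) 1 * Khinv"

definition Xq :: "real \<Rightarrow> nat \<Rightarrow> ('a::real_algebra_1 \<Rightarrow> 'a) \<Rightarrow> (nat \<Rightarrow> 'a) \<Rightarrow> (nat \<Rightarrow> 'a) \<Rightarrow> 'a \<Rightarrow> nat \<Rightarrow> 'a" where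
  "Xq q l s K E Khinv i = Nq K Khinv i l * s (Mq q E i l)"

text \<open>Defining relations of U_q(su(l+1)) (with F_i = E_i^*, K_i self-adjoint, K_i^{-1} = Kinv i),
  enlarged by the self-adjoint invertible element Khat = (K_1 K_2^2 ... K_l^l)^{2/(l+1)}
  (inverse Khinv); the relations of Khat are those forced by this definition.\<close>
definition Uq_enlarged ::
  "real \<Rightarrow> nat \<Rightarrow> ('a::real_algebra_1 \<Rightarrow> 'a) \<Rightarrow> (nat \<Rightarrow> 'a) \<Rightarrow> (nat \<Rightarrow> 'a) \<Rightarrow> (nat \<Rightarrow> 'a)
     \<Rightarrow> 'a \<Rightarrow> 'a \<Rightarrow> bool" where
  "Uq_enlarged q l s K Kinv E Kh Khinv \<longleftrightarrow>
     star_alg s \<and>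
     (\<forall>i\<in>{1..l}. K i * Kinv i = 1 \<and> Kinv i * K i = 1 \<and> s (K i) = K i) \<and>
     (\<forall>i\<in>{1..l}. \<forall>j\<in>{1..l}. K i * K j = K j * K i) \<and>
     (\<forall>i\<in>{1..l}. \<forall>j\<in>{1..l}. K i * E j * Kinv i =
        (if i = j then scaleR q (E j)
         else if i = j + 1 \<or> j = i + 1 then scaleR (q powr (-1/2)) (E j)
         else E j)) \<and>
     (\<forall>i\<in>{1..l}. \<forall>j\<in>{1..l}. E i * s (E j) - s (E j) * E i =
        (if i = j then scaleR (1 / (q - 1 / q)) (K i ^ 2 - Kinv i ^ 2) else 0)) \<and>
     (\<forall>i\<in>{1..l}. \<forall>j\<in>{1..l}. (i = j + 1 \<or> j = i + 1) \<longrightarrow>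
        E i ^ 2 * E j - scaleR (q + 1 / q) (E i * E j * E i) + E j * E i ^ 2 = 0) \<and>
     (\<forall>i\<in>{1..l}. \<forall>j\<in>{1..l}. (i > j + 1 \<or> j > i + 1) \<longrightarrow> E i * E j = E j * E i) \<and>
     Kh * Khinv = 1 \<and> Khinv * Kh = 1 \<and> s Kh = Kh \<and>
     (\<forall>i\<in>{1..l}. Kh * K i = K i * Kh) \<and>
     (\<forall>j\<in>{1..l}. Kh * E j * Khinv = (if j = l then scaleR q (E j) else E j)) \<and>
     Kh ^ (l + 1) = (foldr (*) (map (\<lambda>i. K i ^ i) [1..<Suc l]) 1) ^ 2"

end

theory Submission
  imports Defs
begin

lemma serre_step:
  fixes a b P :: "'a::real_algebra_1" and q r :: real
  assumes qr: "q*r = 1"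
  shows "(q+r) *\<^sub>R ((b*P - r *\<^sub>R (P*b))*(b*P - r *\<^sub>R (P*b))*a - (q+r) *\<^sub>R ((b*P - r *\<^sub>R (P*b))*a*(b*P - r *\<^sub>R (P*b))) + a*(b*P - r *\<^sub>R (P*b))*(b*P - r *\<^sub>R (P*b)))
    = (r*r) *\<^sub>R ((a*P - P*a) * P*b*b) + (r*r) *\<^sub>R (P * (a*P - P*a) * b*b) - (r*r*r*r) *\<^sub>R (P*b * (a*P - P*a) * b) - (r*r) *\<^sub>R (P*b * (a*P - P*a) * b) - (r*r) *\<^sub>R (P*b * (a*P - P*a) * b) - (1) *\<^sub>R (P*b * (a*P - P*a) * b) + (r*r) *\<^sub>R (P*b*b * (a*P - P*a)) + (1) *\<^sub>R (P*b*b * (a*P - P*a)) - (r) *\<^sub>R (b * (a*P - P*a) * P*b) - (q) *\<^sub>R (b * (a*P - P*a) * P*b) + (r*r*r) *\<^sub>R (b*P * (a*P - P*a) * b) + (r) *\<^sub>R (b*P * (a*P - P*a) * b) - (r*r) *\<^sub>R ((a*P - P*a) * b*b*P) - (1) *\<^sub>R ((a*P - P*a) * b*b*P) + (r*r) *\<^sub>R (b * (a*P - P*a) * b*P) + (1) *\<^sub>R (b * (a*P - P*a) * b*P) + (1) *\<^sub>R (b * (a*P - P*a) * b*P) + (q*q) *\<^sub>R (b * (a*P - P*a) * b*P) - (1) *\<^sub>R (b*b * (a*P - P*a) * P) - (1) *\<^sub>R (b*b*P * (a*P - P*a)) + (1) *\<^sub>R ((b*b*a - (q+r) *\<^sub>R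 (b*a*b) + a*b*b) * P*P) - (r*r) *\<^sub>R (P * (b*b*a - (q+r) *\<^sub>R (b*a*b) + a*b*b) * P) - (1) *\<^sub>R (P * (b*b*a - (q+r) *\<^sub>R (b*a*b) + a*b*b) * P) + (r*r) *\<^sub>R (P*P * (b*b*a - (q+r) *\<^sub>R (b*a*b) + a*b*b)) + (r*r*r) *\<^sub>R ((P*P*b - (q+r) *\<^sub>R (P*b*P) + b*P*P) * a*b) + (r) *\<^sub>R ((P*P*b - (q+r) *\<^sub>R (P*b*P) + b*P*P) * a*b) - (r*r) *\<^sub>R (a * (P*P*b - (q+r) *\<^sub>R (P*b*P) + b*P*P) * b) - (1) *\<^sub>R (a*b * (P*P*b - (q+r) *\<^sub>R (P*b*P) + b*P*P)) - (r*r) *\<^sub>R ((P*P*b - (q+r) *\<^sub>R (P*b*P) + b*P*P) * b*a) - (1) *\<^sub>R (b * (P*P*b - (q+r) *\<^sub>R (P*b*P) + b*P*P) * a) + (r) *\<^sub>R (b*a * (P*P*b - (q+r) *\<^sub>R (P*b*P) + b*P*P)) + (q) *\<^sub>R (b*a * (P*P*b - (q+r) *\<^sub>R (P*b*P) + b*P*P))"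
proof -
  have qr2: "r*q = 1" "q*(r*x) = x" "r*(q*x) = x" for x using qr by (auto simp: algebra_simps)
  show ?thesis
    by (simp add: algebra_simps scaleR_add_left scaleR_diff_left qr qr2)
qed

lemma serre_step2:
  fixes a b P :: "'a::real_algebra_1" and q :: real
  assumes q: "0 < q"
    and hA: "a*P = P*a"
    and hS: "b^2*a - (q + 1/q) *\<^sub>R (b*a*b) + a*b^2 = 0"
    and hP: "P^2*b - (q + 1/q) *\<^sub>R (P*b*P) + b*P^2 = 0"
  shows "(qcomm q b P)^2*a - (q + 1/q) *\<^sub>R ((qcomm q b P)*a*(qcomm q b P)) + a*(qcomm q b P)^2 = 0"
proof -
  define r where "r = 1/q"
  have qr: "q*r = 1" using q by (simp add: r_def)
  have A: "a*P - P*a = 0" using hA by simp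
  have S: "b*b*a - (q+r) *\<^sub>R (b*a*b) + a*b*b = 0" using hS by (simp add: r_def power2_eq_square mult.assoc)
  have SP: "P*P*b - (q+r) *\<^sub>R (P*b*P) + b*P*P = 0" using hP by (simp add: r_def power2_eq_square mult.assoc)
  have "(q+r) *\<^sub>R ((b*P - r *\<^sub>R (P*b))*(b*P - r *\<^sub>R (P*b))*a - (q+r) *\<^sub>R ((b*P - r *\<^sub>R (P*b))*a*(b*P - r *\<^sub>R (P*b))) + a*(b*P - r *\<^sub>R (P*b))*(b*P - r *\<^sub>R (P*b))) = 0"
    unfolding serre_step[OF qr] A S SP by simp
  moreover have "q + r > 0" using q by (simp add: r_def add_pos_pos)
  ultimately show ?thesis by (simp add: qcomm_def r_def power2_eq_square mult.assoc)
qed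

definition scm :: "'a::real_algebra_1 \<Rightarrow> 'a \<Rightarrow> real \<Rightarrow> bool" where
  "scm x y c \<longleftrightarrow> x * y = c *\<^sub>R (y * x)"

lemma scm_mult_right: "scm x y c \<Longrightarrow> scm x z d \<Longrightarrow> scm x (y*z) (c*d)"
  unfolding scm_def
proof -
  assume h1: "x * y = c *\<^sub>R (y * x)" and h2: "x * z = d *\<^sub>R (z * x)"
  have "x * (y * z) = (x * y) * z" by (simp add: mult.assoc)
  also have "\<dots> = c *\<^sub>R (y * (x * z))" by (simp add: h1 mult.assoc)
  also have "\<dots> = (c*d) *\<^sub>R (y * z * x)" by (simp add: h2 mult.assoc)
  finally show "x * (y * z) = (c*d) *\<^sub>R (y * z * x)" .
qed

lemma scm_mult_left: "scm x z c \<Longrightarrow> scm y z d \<Longrightarrow> scm (x*y) z (c*d)"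
  unfolding scm_def
proof -
  assume h1: "x * z = c *\<^sub>R (z * x)" and h2: "y * z = d *\<^sub>R (z * y)"
  have "x * y * z = x * (y * z)" by (simp add: mult.assoc)
  also have "\<dots> = d *\<^sub>R ((x * z) * y)" by (simp add: h2 mult.assoc)
  also have "\<dots> = (c*d) *\<^sub>R (z * (x * y))" by (simp add: h1 mult.assoc)
  finally show "x * y * z = (c*d) *\<^sub>R (z * (x * y))" .
qed

lemma scm_qcomm: "scm x y c \<Longrightarrow> scm x z d \<Longrightarrow> scm x (qcomm q y z) (c*d)"
proof -
  assume h1: "scm x y c" and h2: "scm x z d"
  have a: "x * (y*z) = (c*d) *\<^sub>R (y*z*x)" using scm_mult_right[OF h1 h2] by (simp add: scm_def)
  have b: "x * (z*y) = (c*d) *\<^sub>R (z*y*x)" using scm_mult_right[OF h2 h1] by (simp add: scm_def mult.commute)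
  show ?thesis unfolding scm_def qcomm_def
    by (simp add: algebra_simps a b)
qed

lemma scm_Mrec:
  assumes "n \<le> k" and "\<And>b. b \<in> {k-n..k} \<Longrightarrow> scm x (E b) (f b)"
  shows "scm x (Mrec q E n k) (\<Prod>b\<in>{k-n..k}. f b)"
  using assms
proof (induction n)
  case 0
  then show ?case by simp
next
  case (Suc n)
  have IH: "scm x (Mrec q E n k) (\<Prod>b\<in>{k-n..k}. f b)"
    by (rule Suc.IH) (use Suc.prems in auto)
  have e: "scm x (E (k - Suc n)) (f (k - Suc n))" using Suc.prems by auto
  have set: "{k - Suc n..k} = insert (k - Suc n) {k-n..k}" proof -
    have "Suc (k - Suc n) = k - n" using Suc.prems(1) by (simp add: Suc_diff_Suc)
    moreover have "k - Suc n \<le> k" by simp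
    ultimately show ?thesis using Icc_eq_insert_lb_nat[of "k - Suc n" k] by simp
  qed
  have "(\<Prod>b\<in>{k - Suc n..k}. f b) = f (k - Suc n) * (\<Prod>b\<in>{k-n..k}. f b)"
    unfolding set using Suc.prems(1) by (subst prod.insert) auto
  then show ?case using scm_qcomm[OF e IH] by simp
qed

lemma scm_foldr:
  assumes "\<And>a. a \<in> set xs \<Longrightarrow> scm (K a) y (f a)"
  shows "scm (foldr (*) (map K xs) 1) y (prod_list (map f xs))"
  using assms
proof (induction xs)
  case Nil
  then show ?case by (simp add: scm_def)
next
  case (Cons a xs)
  then show ?case using scm_mult_left[of "K a" y "f a"] by auto
qed

locale uq =
  fixes q :: real and l :: nat and s :: "'a::real_algebra_1 \<Rightarrow> 'a"
    and K Kinv E :: "nat \<Rightarrow> 'a" and Kh Khinv :: 'a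
  assumes q: "0 < q" and U: "Uq_enlarged q l s K Kinv E Kh Khinv"
begin

lemma serreE: "i \<in> {1..l} \<Longrightarrow> j \<in> {1..l} \<Longrightarrow> i = j + 1 \<or> j = i + 1 \<Longrightarrow>
   E i ^ 2 * E j - scaleR (q + 1 / q) (E i * E j * E i) + E j * E i ^ 2 = 0"
  using U unfolding Uq_enlarged_def by blast

lemma commE: "i \<in> {1..l} \<Longrightarrow> j \<in> {1..l} \<Longrightarrow> i > j + 1 \<or> j > i + 1 \<Longrightarrow> E i * E j = E j * E i"
  using U unfolding Uq_enlarged_def by blast

lemma Mq_l: "Mq q E l l = E l" by (simp add: Mq_def)

lemma Mq_step: "k < l \<Longrightarrow> Mq q E k l = qcomm q (E k) (Mq q E (Suc k) l)"
proof -
  assume "k < l"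
  then have "l - k = Suc (l - Suc k)" "l - Suc (l - Suc k) = k" by auto
  then show ?thesis unfolding Mq_def by simp
qed

lemma E_comm_M: "1 \<le> k \<Longrightarrow> k + 2 \<le> m \<Longrightarrow> m \<le> l \<Longrightarrow> E k * Mq q E m l = Mq q E m l * E k"
proof -
  assume h: "1 \<le> k" "k + 2 \<le> m" "m \<le> l"
  have "scm (E k) (Mrec q E (l - m) l) (\<Prod>b\<in>{l-(l-m)..l}. (\<lambda>_. 1) b)"
    apply (rule scm_Mrec)
    using h by (auto simp: scm_def intro!: commE)
  then show ?thesis by (simp add: scm_def Mq_def)
qed

lemma serreM_aux: "\<forall>k. 1 \<le> k \<and> l - k = Suc d \<longrightarrow>
   (Mq q E (Suc k) l)^2 * E k - (q + 1/q) *\<^sub>R (Mq q E (Suc k) l * E k * Mq q E (Suc k) l) + E k * (Mq q E (Suc k) l)^2 = 0"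
proof (induction d)
  case 0
  show ?case
  proof (intro allI impI)
    fix k assume h: "1 \<le> k \<and> l - k = Suc 0"
    then have "Suc k = l" by auto
    then show "(Mq q E (Suc k) l)^2 * E k - (q + 1/q) *\<^sub>R (Mq q E (Suc k) l * E k * Mq q E (Suc k) l) + E k * (Mq q E (Suc k) l)^2 = 0"
      using serreE[of l k] h by (simp add: Mq_l)
  qed
next
  case (Suc d)
  show ?case
  proof (intro allI impI)
    fix k assume h: "1 \<le> k \<and> l - k = Suc (Suc d)"
    have IH: "(Mq q E (Suc (Suc k)) l)^2 * E (Suc k) - (q + 1/q) *\<^sub>R (Mq q E (Suc (Suc k)) l * E (Suc k) * Mq q E (Suc (Suc k)) l) + E (Suc k) * (Mq q E (Suc (Suc k)) l)^2 = 0"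
      using Suc.IH h by (metis Suc_diff_Suc Suc_inject le_add1 plus_1_eq_Suc zero_less_Suc zero_less_diff)
    have st: "Mq q E (Suc k) l = qcomm q (E (Suc k)) (Mq q E (Suc (Suc k)) l)"
      using h by (intro Mq_step) auto
    show "(Mq q E (Suc k) l)^2 * E k - (q + 1/q) *\<^sub>R (Mq q E (Suc k) l * E k * Mq q E (Suc k) l) + E k * (Mq q E (Suc k) l)^2 = 0"
      unfolding st
    proof (rule serre_step2[OF q])
      show "E k * Mq q E (Suc (Suc k)) l = Mq q E (Suc (Suc k)) l * E k"
        using h by (intro E_comm_M) auto
      show "(E (Suc k))\<^sup>2 * E k - (q + 1 / q) *\<^sub>R (E (Suc k) * E k * E (Suc k)) + E k * (E (Suc k))\<^sup>2 = 0"
        using h by (intro serreE) auto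
      show "(Mq q E (Suc (Suc k)) l)\<^sup>2 * E (Suc k) - (q + 1 / q) *\<^sub>R (Mq q E (Suc (Suc k)) l * E (Suc k) * Mq q E (Suc (Suc k)) l) + E (Suc k) * (Mq q E (Suc (Suc k)) l)\<^sup>2 = 0"
        by (rule IH)
    qed
  qed
qed

lemma serreM: "1 \<le> k \<Longrightarrow> k < l \<Longrightarrow>
   (Mq q E (Suc k) l)^2 * E k - (q + 1/q) *\<^sub>R (Mq q E (Suc k) l * E k * Mq q E (Suc k) l) + E k * (Mq q E (Suc k) l)^2 = 0"
  using serreM_aux[of "l - k - 1"] by (metis Suc_diff_Suc diff_Suc_1 zero_less_diff)

lemma Mcomm_aux: "\<forall>i. 1 \<le> i \<and> j - i = Suc d \<and> j \<le> l \<longrightarrow> Mq q E i l * Mq q E j l = q *\<^sub>R (Mq q E j l * Mq q E i l)"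
proof (induction d)
  case 0
  show ?case
  proof (intro allI impI)
    fix i assume h: "1 \<le> i \<and> j - i = Suc 0 \<and> j \<le> l"
    then have j: "j = Suc i" by auto
    define M where "M = Mq q E j l"
    have st: "Mq q E i l = E i * M - (1/q) *\<^sub>R (M * E i)"
      using h j by (simp add: Mq_step M_def qcomm_def)
    have S: "M^2 * E i - (q + 1/q) *\<^sub>R (M * E i * M) + E i * M^2 = 0"
      using serreM[of i] h j by (simp add: M_def)
    have "(E i * M - (1/q) *\<^sub>R (M * E i)) * M - q *\<^sub>R (M * (E i * M - (1/q) *\<^sub>R (M * E i)))
          = M^2 * E i - (q + 1/q) *\<^sub>R (M * E i * M) + E i * M^2"
      using q by (simp add: algebra_simps power2_eq_square scaleR_add_left)
    then show "Mq q E i l * Mq q E j l = q *\<^sub>R (Mq q E j l * Mq q E i l)"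
      using S st by (simp add: M_def[symmetric])
  qed
next
  case (Suc d)
  show ?case
  proof (intro allI impI)
    fix i assume h: "1 \<le> i \<and> j - i = Suc (Suc d) \<and> j \<le> l"
    have IH: "Mq q E (Suc i) l * Mq q E j l = q *\<^sub>R (Mq q E j l * Mq q E (Suc i) l)"
      using Suc.IH h by auto
    have c: "E i * Mq q E j l = Mq q E j l * E i" using h by (intro E_comm_M) auto
    have il: "i < l" using h by auto
    have st: "Mq q E i l = E i * Mq q E (Suc i) l - (1/q) *\<^sub>R (Mq q E (Suc i) l * E i)"
      by (simp add: Mq_step[OF il] qcomm_def)
    define A where "A = Mq q E (Suc i) l"
    define B where "B = Mq q E j l"
    define x where "x = E i"
    have IH': "A * B = q *\<^sub>R (B * A)" using IH by (simp add: A_def B_def)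
    have c': "x * B = B * x" using c by (simp add: x_def B_def)
    have xba: "x*(B*A) = B*(x*A)" by (metis c' mult.assoc)
    have h1: "x*(A*B) = q *\<^sub>R (B*(x*A))" by (simp add: IH' xba)
    have abx: "A*(x*B) = (A*B)*x" by (simp add: c' mult.assoc)
    have h2: "A*(x*B) = q *\<^sub>R (B*(A*x))" by (simp add: abx IH' mult.assoc)
    have "(x * A - (1/q) *\<^sub>R (A * x)) * B = x * (A * B) - (1/q) *\<^sub>R (A * (x * B))"
      by (simp add: algebra_simps)
    also have "\<dots> = q *\<^sub>R (B*(x*A)) - B*(A*x)"
      using q by (simp add: h1 h2)
    also have "\<dots> = q *\<^sub>R (B * (x * A - (1/q) *\<^sub>R (A * x)))"
      using q by (simp add: algebra_simps)
    finally show "Mq q E i l * Mq q E j l = q *\<^sub>R (Mq q E j l * Mq q E i l)"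
      using st by (simp add: A_def B_def x_def)
  qed
qed

lemma Mcomm: "1 \<le> i \<Longrightarrow> i < j \<Longrightarrow> j \<le> l \<Longrightarrow> Mq q E i l * Mq q E j l = q *\<^sub>R (Mq q E j l * Mq q E i l)"
  using Mcomm_aux[of j "j - i - 1"] by (metis Suc_diff_Suc diff_Suc_1 zero_less_diff)

lemmas Uc = U[unfolded Uq_enlarged_def]

lemma Kprops: "i \<in> {1..l} \<Longrightarrow> K i * Kinv i = 1 \<and> Kinv i * K i = 1 \<and> s (K i) = K i"
  using Uc[THEN conjunct2, THEN conjunct1] by blast
lemma Kcomm: "i \<in> {1..l} \<Longrightarrow> j \<in> {1..l} \<Longrightarrow> K i * K j = K j * K i"
  using Uc[THEN conjunct2, THEN conjunct2, THEN conjunct1] by blast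
lemma KE: "i \<in> {1..l} \<Longrightarrow> j \<in> {1..l} \<Longrightarrow> K i * E j * Kinv i =
        (if i = j then scaleR q (E j)
         else if i = j + 1 \<or> j = i + 1 then scaleR (q powr (-1/2)) (E j)
         else E j)"
  using Uc[THEN conjunct2, THEN conjunct2, THEN conjunct2, THEN conjunct1] by blast
lemma Khprops: "Kh * Khinv = 1" "Khinv * Kh = 1" "s Kh = Kh"
  using Uc[THEN conjunct2, THEN conjunct2, THEN conjunct2, THEN conjunct2, THEN conjunct2, THEN conjunct2, THEN conjunct2, THEN conjunct1] Uc[THEN conjunct2, THEN conjunct2, THEN conjunct2, THEN conjunct2, THEN conjunct2, THEN conjunct2, THEN conjunct2, THEN conjunct2, THEN conjunct1] Uc[THEN conjunct2, THEN conjunct2, THEN conjunct2, THEN conjunct2, THEN conjunct2, THEN conjunct2, THEN conjunct2, THEN conjunct2, THEN conjunct2, THEN conjunct1] by blast+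
lemma KhK: "i \<in> {1..l} \<Longrightarrow> Kh * K i = K i * Kh"
  using Uc[THEN conjunct2, THEN conjunct2, THEN conjunct2, THEN conjunct2, THEN conjunct2, THEN conjunct2, THEN conjunct2, THEN conjunct2, THEN conjunct2, THEN conjunct2, THEN conjunct1] by blast
lemma KhE: "j \<in> {1..l} \<Longrightarrow> Kh * E j * Khinv = (if j = l then scaleR q (E j) else E j)"
  using Uc[THEN conjunct2, THEN conjunct2, THEN conjunct2, THEN conjunct2, THEN conjunct2, THEN conjunct2, THEN conjunct2, THEN conjunct2, THEN conjunct2, THEN conjunct2, THEN conjunct2, THEN conjunct1] by blast
lemma star: "s (x + y) = s x + s y" "s (x * y) = s y * s x" "s (scaleR c x) = scaleR c (s x)" "s (s x) = x" "s 1 = 1"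
  using Uc[THEN conjunct1] unfolding star_alg_def by blast+

definition e :: "nat \<Rightarrow> nat \<Rightarrow> real" where
  "e a b = (if a = b then 1 else if a = b + 1 \<or> b = a + 1 then -1/2 else 0)"

lemma scm_KE: "a \<in> {1..l} \<Longrightarrow> b \<in> {1..l} \<Longrightarrow> scm (K a) (E b) (q powr e a b)"
proof -
  assume h: "a \<in> {1..l}" "b \<in> {1..l}"
  have "K a * E b = (K a * E b * Kinv a) * K a"
    using Kprops[OF h(1)] by (simp add: mult.assoc)
  also have "\<dots> = (q powr e a b) *\<^sub>R (E b * K a)"
    using KE[OF h] q by (simp add: e_def)
  finally show ?thesis by (simp add: scm_def)
qed

lemma scm_KhinvE: "b \<in> {1..l} \<Longrightarrow> scm Khinv (E b) (q powr (- (if b = l then 1 else 0)))"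
proof -
  assume h: "b \<in> {1..l}"
  define c where "c = (if b = l then q else 1)"
  have c0: "c \<noteq> 0" using q by (simp add: c_def)
  have "Khinv * (Kh * E b * Khinv) = (Khinv * Kh) * (E b * Khinv)" by (simp add: mult.assoc)
  then have "E b * Khinv = Khinv * (Kh * E b * Khinv)" using Khprops(2) by simp
  also have "\<dots> = c *\<^sub>R (Khinv * E b)"
    using KhE[OF h] by (simp add: c_def)
  finally have "Khinv * E b = (1/c) *\<^sub>R (E b * Khinv)" using c0 by simp
  moreover have "1/c = q powr (- (if b = l then 1 else 0))"
    using q by (simp add: c_def powr_minus divide_inverse)
  ultimately show ?thesis by (simp add: scm_def)
qed

lemma commute_foldr:
  assumes "\<And>a. a \<in> set xs \<Longrightarrow> K a * y = y * K a"
  shows "foldr (*) (map K xs) 1 * y = y * foldr (*) (map K xs) 1"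
proof -
  have "scm (foldr (*) (map K xs) 1) y (prod_list (map (\<lambda>_. 1) xs))"
    by (rule scm_foldr) (use assms in \<open>auto simp: scm_def\<close>)
  moreover have "prod_list (map (\<lambda>_. 1::real) xs) = 1" by (induction xs) auto
  ultimately show ?thesis by (simp add: scm_def)
qed

lemma Khinv_K: "i \<in> {1..l} \<Longrightarrow> Khinv * K i = K i * Khinv"
proof -
  assume h: "i \<in> {1..l}"
  have "Khinv * K i = Khinv * K i * (Kh * Khinv)" using Khprops by simp
  also have "\<dots> = Khinv * (K i * Kh) * Khinv" by (simp add: mult.assoc)
  also have "\<dots> = Khinv * (Kh * K i) * Khinv" using KhK[OF h] by simp
  also have "\<dots> = (Khinv * Kh) * (K i * Khinv)" by (simp add: mult.assoc)
  also have "\<dots> = K i * Khinv" using Khprops by simp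
  finally show ?thesis .
qed

lemma s_Khinv: "s Khinv = Khinv"
proof -
  have "s Khinv * Kh = 1" using star(2)[of Kh Khinv] Khprops star(5) by simp
  have "s Khinv = s Khinv * (Kh * Khinv)" using Khprops by simp
  also have "\<dots> = (s Khinv * Kh) * Khinv" by (simp only: mult.assoc)
  also have "\<dots> = Khinv" using \<open>s Khinv * Kh = 1\<close> by simp
  finally show ?thesis .
qed

abbreviation F :: "nat \<Rightarrow> 'a" where "F i \<equiv> foldr (*) (map K [i..<Suc l]) 1"

lemma F_K: "1 \<le> i \<Longrightarrow> j \<in> {1..l} \<Longrightarrow> F i * K j = K j * F i"
  by (rule commute_foldr) (auto intro: Kcomm)

lemma F_F: "1 \<le> i \<Longrightarrow> 1 \<le> j \<Longrightarrow> F i * F j = F j * F i"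
proof (rule commute_foldr)
  fix a assume hj: "1 \<le> j" and "1 \<le> i" and a: "a \<in> set [i..<Suc l]"
  then have "a \<in> {1..l}" by auto
  from F_K[OF hj this] show "K a * F j = F j * K a" by (rule sym)
qed

lemma F_Khinv: "1 \<le> i \<Longrightarrow> F i * Khinv = Khinv * F i"
  by (rule commute_foldr) (auto simp: Khinv_K)

lemma s_foldr: "set xs \<subseteq> {1..l} \<Longrightarrow> s (foldr (*) (map K xs) 1) = foldr (*) (map K xs) 1"
proof (induction xs)
  case Nil
  then show ?case by (simp add: star)
next
  case (Cons a xs)
  have "s (foldr (*) (map K (a # xs)) 1) = foldr (*) (map K xs) 1 * K a"
    using Cons Kprops[of a] by (simp add: star)
  also have "\<dots> = K a * foldr (*) (map K xs) 1"
  proof (rule commute_foldr)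
    fix aa assume "aa \<in> set xs"
    then have "aa \<in> {1..l}" "a \<in> {1..l}" using Cons.prems by auto
    then show "K aa * K a = K a * K aa" by (rule Kcomm)
  qed
  finally show ?case by simp
qed

lemma N_eq: "Nq K Khinv i l = F i * Khinv" by (simp add: Nq_def)

lemma s_N: "1 \<le> i \<Longrightarrow> s (Nq K Khinv i l) = Nq K Khinv i l"
proof -
  assume h: "1 \<le> i"
  have "s (F i) = F i" using h by (intro s_foldr) auto
  then show ?thesis using F_Khinv[OF h] by (simp add: N_eq star s_Khinv)
qed

lemma NN: "1 \<le> i \<Longrightarrow> 1 \<le> j \<Longrightarrow> Nq K Khinv i l * Nq K Khinv j l = Nq K Khinv j l * Nq K Khinv i l"
proof -
  assume h: "1 \<le> i" "1 \<le> j"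
  have "F i * Khinv * (F j * Khinv) = F i * F j * (Khinv * Khinv)"
    using F_Khinv[OF h(2)] by (metis mult.assoc)
  also have "\<dots> = F j * F i * (Khinv * Khinv)" using F_F[OF h] by simp
  also have "\<dots> = F j * Khinv * (F i * Khinv)"
    using F_Khinv[OF h(1)] by (metis mult.assoc)
  finally show ?thesis by (simp add: N_eq)
qed

lemma prod_powr: "prod_list (map (\<lambda>a. q powr g a) xs) = q powr (sum_list (map g xs))"
  using q by (induction xs) (auto simp: powr_add)

lemma scm_NE: "1 \<le> i \<Longrightarrow> b \<in> {1..l} \<Longrightarrow>
   scm (Nq K Khinv i l) (E b) (q powr ((\<Sum>a\<in>{i..l}. e a b) - (if b = l then 1 else 0)))"
proof -
  assume h: "1 \<le> i" "b \<in> {1..l}"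
  have "scm (F i) (E b) (prod_list (map (\<lambda>a. q powr e a b) [i..<Suc l]))"
    by (rule scm_foldr) (use h in \<open>auto intro: scm_KE\<close>)
  moreover have "sum_list (map (\<lambda>a. e a b) [i..<Suc l]) = (\<Sum>a\<in>{i..l}. e a b)"
    by (simp only: interv_sum_list_conv_sum_set_nat set_upt atLeastLessThanSuc_atLeastAtMost)
  ultimately have "scm (F i) (E b) (q powr (\<Sum>a\<in>{i..l}. e a b))" by (simp add: prod_powr)
  from scm_mult_left[OF this scm_KhinvE[OF h(2)]]
  show ?thesis by (simp add: N_eq powr_add[symmetric])
qed

lemma sum_e: "1 \<le> b \<Longrightarrow> finite A \<Longrightarrow> (\<Sum>a\<in>A. e a b) =
   (if b \<in> A then 1 else 0) + (if b - 1 \<in> A then -1/2 else 0) + (if b + 1 \<in> A then -1/2 else 0)"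
proof -
  assume h: "1 \<le> b" "finite A"
  have "\<And>a. e a b = (if a = b then 1 else 0) + (if a = b - 1 then -1/2 else 0) + (if a = b + 1 then -1/2 else 0)"
    using h(1) by (auto simp: e_def)
  then have "(\<Sum>a\<in>A. e a b) = (\<Sum>a\<in>A. (if a = b then 1 else 0) + (if a = b - 1 then -1/2 else 0) + (if a = b + 1 then -1/2 else 0))"
    by simp
  also have "\<dots> = (\<Sum>a\<in>A. (if a = b then 1 else 0)) + (\<Sum>a\<in>A. (if a = b - 1 then -1/2 else 0)) + (\<Sum>a\<in>A. (if a = b + 1 then -1/2 else 0))"
    by (simp add: sum.distrib)
  also have "\<dots> = (if b \<in> A then 1 else 0) + (if b - 1 \<in> A then -1/2 else 0) + (if b + 1 \<in> A then -1/2 else 0)"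
    using h(2) by (simp add: sum.delta')
  finally show ?thesis .
qed

definition g :: "nat \<Rightarrow> nat \<Rightarrow> real" where
  "g i b = (\<Sum>a\<in>{i..l}. e a b) - (if b = l then 1 else 0)"

lemma g_closed: "1 \<le> i \<Longrightarrow> i \<le> l \<Longrightarrow> 1 \<le> b \<Longrightarrow> b \<le> l \<Longrightarrow>
   g i b = (if i \<le> b then 1 else 0) + (if i + 1 \<le> b then -1/2 else 0) + (if i \<le> b + 1 \<and> b + 1 \<le> l then -1/2 else 0) - (if b = l then 1 else 0)"
  unfolding g_def by (subst sum_e) auto

lemma S_aux: "\<forall>k. 1 \<le> k \<and> l - k = d \<and> k \<le> l \<longrightarrow> 1 \<le> i \<longrightarrow> i \<le> l \<longrightarrow>
   (\<Sum>b\<in>{k..l}. g i b) = (if k = i then 0 else -1/2)"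
proof (induction d)
  case 0
  show ?case
  proof (intro allI impI)
    fix k assume h: "1 \<le> k \<and> l - k = 0 \<and> k \<le> l" "1 \<le> i" "i \<le> l"
    then show "(\<Sum>b\<in>{k..l}. g i b) = (if k = i then 0 else -1/2)"
      by (auto simp: g_closed)
  qed
next
  case (Suc d)
  show ?case
  proof (intro allI impI)
    fix k assume h: "1 \<le> k \<and> l - k = Suc d \<and> k \<le> l" "1 \<le> i" "i \<le> l"
    have "1 \<le> Suc k \<and> l - Suc k = d \<and> Suc k \<le> l" using h by auto
    then have IH: "(\<Sum>b\<in>{Suc k..l}. g i b) = (if Suc k = i then 0 else -1/2)"
      using Suc.IH h(2,3) by blast
    have "(\<Sum>b\<in>{k..l}. g i b) = g i k + (\<Sum>b\<in>{Suc k..l}. g i b)"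
      using h by (simp add: sum.atLeast_Suc_atMost)
    also have "\<dots> = g i k + (if Suc k = i then 0 else -1/2)" by (simp only: IH)
    also have "\<dots> = (if k = i then 0 else -1/2)"
      using h g_closed[of i k] by auto
    finally show "(\<Sum>b\<in>{k..l}. g i b) = (if k = i then 0 else -1/2)" .
  qed
qed

lemma scm_NM: "1 \<le> i \<Longrightarrow> i \<le> l \<Longrightarrow> 1 \<le> k \<Longrightarrow> k \<le> l \<Longrightarrow>
   scm (Nq K Khinv i l) (Mq q E k l) (q powr (if k = i then 0 else -1/2))"
proof -
  assume h: "1 \<le> i" "i \<le> l" "1 \<le> k" "k \<le> l"
  have "scm (Nq K Khinv i l) (Mrec q E (l - k) l) (\<Prod>b\<in>{l-(l-k)..l}. q powr g i b)"
  proof (rule scm_Mrec)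
    show "l - k \<le> l" by simp
    fix b assume "b \<in> {l - (l - k)..l}"
    then have b: "b \<in> {1..l}" using h by auto
    show "scm (Nq K Khinv i l) (E b) (q powr g i b)"
      unfolding g_def by (rule scm_NE) (use h b in auto)
  qed
  moreover have "l - (l - k) = k" using h by simp
  moreover have "(\<Prod>b\<in>{k..l}. q powr g i b) = q powr (\<Sum>b\<in>{k..l}. g i b)"
    using q by (simp add: powr_sum)
  moreover have "(\<Sum>b\<in>{k..l}. g i b) = (if k = i then 0 else -1/2)"
    using S_aux[of "l - k"] h by auto
  ultimately show ?thesis by (simp add: Mq_def)
qed

lemma main:
  assumes "1 \<le> i" "i < j" "j \<le> l"
  shows "Xq q l s K E Khinv i * Xq q l s K E Khinv j
           = scaleR (1 / q) (Xq q l s K E Khinv j * Xq q l s K E Khinv i)"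
proof -
  define Ni Nj Mi Mj c where "Ni = Nq K Khinv i l" "Nj = Nq K Khinv j l"
    "Mi = Mq q E i l" "Mj = Mq q E j l" "c = q powr (-1/2)"
  have h1: "Ni * Mj = c *\<^sub>R (Mj * Ni)"
    using scm_NM[of i j] assms by (simp add: scm_def Ni_Nj_Mi_Mj_c_def)
  have h2: "Nj * Mi = c *\<^sub>R (Mi * Nj)"
    using scm_NM[of j i] assms by (simp add: scm_def Ni_Nj_Mi_Mj_c_def)
  have sNi: "s Ni = Ni" and sNj: "s Nj = Nj" using s_N assms by (auto simp: Ni_Nj_Mi_Mj_c_def)
  have st1: "s Mi * Nj = c *\<^sub>R (Nj * s Mi)"
    using arg_cong[OF h2, of s] by (simp add: star sNj)
  have st2: "s Mj * Ni = c *\<^sub>R (Ni * s Mj)"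
    using arg_cong[OF h1, of s] by (simp add: star sNi)
  have MM: "Mi * Mj = q *\<^sub>R (Mj * Mi)"
    using Mcomm assms by (simp add: Ni_Nj_Mi_Mj_c_def)
  have st3: "s Mj * s Mi = q *\<^sub>R (s Mi * s Mj)"
    using arg_cong[OF MM, of s] by (simp add: star)
  have NN': "Nj * Ni = Ni * Nj" using NN assms by (simp add: Ni_Nj_Mi_Mj_c_def)
  have L: "Ni * s Mi * (Nj * s Mj) = c *\<^sub>R (Ni * Nj * (s Mi * s Mj))"
  proof -
    have "Ni * s Mi * (Nj * s Mj) = Ni * (s Mi * Nj) * s Mj" by (simp add: mult.assoc)
    also have "\<dots> = c *\<^sub>R (Ni * Nj * (s Mi * s Mj))" by (simp add: st1 mult.assoc)
    finally show ?thesis .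
  qed
  have R: "Nj * s Mj * (Ni * s Mi) = (c * q) *\<^sub>R (Ni * Nj * (s Mi * s Mj))"
  proof -
    have "Nj * s Mj * (Ni * s Mi) = Nj * (s Mj * Ni) * s Mi" by (simp add: mult.assoc)
    also have "\<dots> = c *\<^sub>R (Nj * Ni * (s Mj * s Mi))" by (simp add: st2 mult.assoc)
    also have "\<dots> = (c * q) *\<^sub>R (Ni * Nj * (s Mi * s Mj))" by (simp add: st3 NN')
    finally show ?thesis .
  qed
  show ?thesis
    unfolding Xq_def using L R q
    by (simp add: Ni_Nj_Mi_Mj_c_def[symmetric] mult.assoc)
qed

end

theorem lemma3p14:
  fixes q :: real and l :: nat and s :: "'a::real_algebra_1 \<Rightarrow> 'a"
    and K Kinv E :: "nat \<Rightarrow> 'a" and Kh Khinv :: 'a and i j :: nat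
  assumes "0 < q" "q < 1" "1 \<le> l"
    and "Uq_enlarged q l s K Kinv E Kh Khinv"
    and "1 \<le> i" "i < j" "j \<le> l"
  shows "Xq q l s K E Khinv i * Xq q l s K E Khinv j
           = scaleR (1 / q) (Xq q l s K E Khinv j * Xq q l s K E Khinv i)"
proof -
  interpret uq q l s K Kinv E Kh Khinv by unfold_locales (use assms in auto)
  show ?thesis using main assms by blast
qed


end
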